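(* Let $P_1,P_2\in\mathbf{C}^{n\times n}$. The following three statements are equivalent: (1) $\{P_1,P_2\}>0$ (resp. $\geq 0$); (2) $\{P_1,P_2\}_\circ>0$ (resp. $\geq 0$); (3) $\{P_1,P_2\}_\diamond>0$ (resp. $\geq0$). Moreover, a real matrix $P\in\mathbf{R}^{2n\times 2n}$ is positive definite (resp. positive semidefinite) if and only if there exists a unique bimatrix $\{P_1,P_2\}>0$ (resp. $\geq 0$) such that $\{P_1,P_2\}_\circ=P$.
   Context: $P^{\#}$, $P^{\mathrm T}$, $P^{\mathrm H}$ denote entrywise conjugate, transpose, conjugate transpose. For $A_1,A_2\in\mathbf{C}^{n\times m}$ the bimatrix $\{A_1,A_2\}$ is the real-linear map $x\mapsto A_1x+A_2^{\#}x^{\#}$ (equality = equality as maps, equivalently of the pairs). Its conjugate transpose is $\{A_1,A_2\}^{\mathrm H}=\{A_1^{\mathrm H},A_2^{\mathrm T}\}$. A square bimatrix $\{P_1,P_2\}$ is Hermite if $\{P_1,P_2\}=\{P_1,P_2\}^{\mathrm H}$, i.e. $P_1=P_1^{\mathrm H}$ and $P_2=P_2^{\mathrm T}$. It is positive definite (resp. semidefinite), written $\{P_1,P_2\}>0$ (resp. $\geq0$), if it is Hermite and $\mathrm{Re}\big(x^{\mathrm H}(P_1x+P_2^{\#}x^{\#})\big)>0$ (resp. $\geq 0$) for all nonzero $x\in\mathbf{C}^n$. Complex lifting: $\{P_1,P_2\}_\diamond=\begin{bmatrix}P_1 & P_2^{\#}\\ P_2 & P_1^{\#}\end{bmatrix}$.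 Real representation: $\{P_1,P_2\}_\circ=\begin{bmatrix}\mathrm{Re}(P_1+P_2) & -\mathrm{Im}(P_1+P_2)\\ \mathrm{Im}(P_1-P_2) & \mathrm{Re}(P_1-P_2)\end{bmatrix}$. For an ordinary (real or complex) square matrix, $>0$ (resp. $\geq0$) means Hermitian (symmetric if real) positive definite (resp. semidefinite). *)

theory Defs
  imports "HOL-Analysis.Analysis"
begin

text \<open>Square complex n x n matrices are modelled as complex^'n^'n (dimension n = CARD('n));
  2n x 2n matrices are indexed by the disjoint sum 'n + 'n (first block = Inl, second = Inr).\<close>

definition cmat_conj :: "complex^'m^'n \<Rightarrow> complex^'m^'n" where
  "cmat_conj A = (\<chi> i j. cnj (A $ i $ j))"

definition cvec_conj :: "complex^'n \<Rightarrow> complex^'n" where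
  "cvec_conj x = (\<chi> i. cnj (x $ i))"

definition cmat_adj :: "complex^'m^'n \<Rightarrow> complex^'n^'m" where
  "cmat_adj A = transpose (cmat_conj A)"

definition cinner :: "complex^'n \<Rightarrow> complex^'n \<Rightarrow> complex" where
  "cinner x y = (\<Sum>i\<in>UNIV. cnj (x $ i) * y $ i)"

definition bimat_apply :: "complex^'m^'n \<Rightarrow> complex^'m^'n \<Rightarrow> complex^'m \<Rightarrow> complex^'n" where
  "bimat_apply A1 A2 x = A1 *v x + cmat_conj A2 *v cvec_conj x"

definition bimat_hermite :: "complex^'n^'n \<Rightarrow> complex^'n^'n \<Rightarrow> bool" where
  "bimat_hermite P1 P2 \<longleftrightarrow> P1 = cmat_adj P1 \<and> P2 = transpose P2"

definition bimat_pd :: "complex^'n^'n \<Rightarrow> complex^'n^'n \<Rightarrow> bool" where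
  "bimat_pd P1 P2 \<longleftrightarrow> bimat_hermite P1 P2 \<and>
     (\<forall>x. x \<noteq> 0 \<longrightarrow> Re (cinner x (bimat_apply P1 P2 x)) > 0)"

definition bimat_psd :: "complex^'n^'n \<Rightarrow> complex^'n^'n \<Rightarrow> bool" where
  "bimat_psd P1 P2 \<longleftrightarrow> bimat_hermite P1 P2 \<and>
     (\<forall>x. x \<noteq> 0 \<longrightarrow> Re (cinner x (bimat_apply P1 P2 x)) \<ge> 0)"

definition bimat_lift :: "complex^'n^'n \<Rightarrow> complex^'n^'n \<Rightarrow> complex^('n+'n)^('n+'n)" where
  "bimat_lift P1 P2 = (\<chi> i j. case (i, j) of
      (Inl a, Inl b) \<Rightarrow> P1 $ a $ b
    | (Inl a, Inr b) \<Rightarrow> cnj (P2 $ a $ b)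
    | (Inr a, Inl b) \<Rightarrow> P2 $ a $ b
    | (Inr a, Inr b) \<Rightarrow> cnj (P1 $ a $ b))"

definition bimat_real :: "complex^'n^'n \<Rightarrow> complex^'n^'n \<Rightarrow> real^('n+'n)^('n+'n)" where
  "bimat_real P1 P2 = (\<chi> i j. case (i, j) of
      (Inl a, Inl b) \<Rightarrow> Re (P1 $ a $ b + P2 $ a $ b)
    | (Inl a, Inr b) \<Rightarrow> - Im (P1 $ a $ b + P2 $ a $ b)
    | (Inr a, Inl b) \<Rightarrow> Im (P1 $ a $ b - P2 $ a $ b)
    | (Inr a, Inr b) \<Rightarrow> Re (P1 $ a $ b - P2 $ a $ b))"

definition cmat_pd :: "complex^'n^'n \<Rightarrow> bool" where
  "cmat_pd M \<longleftrightarrow> M = cmat_adj M \<and> (\<forall>x. x \<noteq> 0 \<longrightarrow> Re (cinner x (M *v x)) > 0)"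

definition cmat_psd :: "complex^'n^'n \<Rightarrow> bool" where
  "cmat_psd M \<longleftrightarrow> M = cmat_adj M \<and> (\<forall>x. x \<noteq> 0 \<longrightarrow> Re (cinner x (M *v x)) \<ge> 0)"

definition rmat_pd :: "real^'n^'n \<Rightarrow> bool" where
  "rmat_pd M \<longleftrightarrow> M = transpose M \<and> (\<forall>x. x \<noteq> 0 \<longrightarrow> x \<bullet> (M *v x) > 0)"

definition rmat_psd :: "real^'n^'n \<Rightarrow> bool" where
  "rmat_psd M \<longleftrightarrow> M = transpose M \<and> (\<forall>x. x \<noteq> 0 \<longrightarrow> x \<bullet> (M *v x) \<ge> 0)"

end

theory Submission imports Defs begin

lemma sum_plus_UNIV:
  fixes f :: "('a::finite + 'b::finite) \<Rightarrow> 'c::comm_monoid_add"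
  shows "(\<Sum>i\<in>UNIV. f i) = (\<Sum>a\<in>UNIV. f (Inl a)) + (\<Sum>b\<in>UNIV. f (Inr b))"
  by (subst UNIV_Plus_UNIV[symmetric], subst sum.Plus) (simp_all add: comp_def)

definition realvec :: "complex^'n \<Rightarrow> real^('n+'n)" where
  "realvec x = (\<chi> i. case i of Inl a \<Rightarrow> Re (x$a) | Inr a \<Rightarrow> Im (x$a))"
definition cvec :: "real^('n+'n) \<Rightarrow> complex^'n" where
  "cvec w = (\<chi> a. Complex (w$Inl a) (w$Inr a))"
definition liftv :: "complex^'n \<Rightarrow> complex^('n+'n)" where
  "liftv x = (\<chi> i. case i of Inl a \<Rightarrow> x$a | Inr a \<Rightarrow> cnj (x$a))"

lemma realvec_cvec: "realvec (cvec w) = w"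
  unfolding realvec_def cvec_def by (simp add: vec_eq_iff split: sum.split)

lemma realvec_eq0: "(realvec x = 0) = (x = 0)"
  unfolding realvec_def by (auto simp: vec_eq_iff complex_eq_iff split: sum.split)

lemma liftv_eq0: "(liftv x = 0) = (x = 0)"
  unfolding liftv_def by (auto simp: vec_eq_iff split: sum.split)

lemma form_real:
  "Re (cinner x (bimat_apply P1 P2 x)) = realvec x \<bullet> (bimat_real P1 P2 *v realvec x)"
  unfolding cinner_def bimat_apply_def bimat_real_def realvec_def inner_vec_def
    matrix_vector_mult_def cmat_conj_def cvec_conj_def
  apply (simp add: sum_plus_UNIV sum_distrib_left sum.distrib[symmetric] distrib_left)
  apply (rule sum.cong, simp)
  apply (rule sum.cong, simp)
  apply (simp add: algebra_simps)
  done

lemma form_lift: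
  "cinner (liftv p) (bimat_lift P1 P2 *v liftv q) = complex_of_real (2 * Re (cinner p (bimat_apply P1 P2 q)))"
proof -
  have "cinner (liftv p) (bimat_lift P1 P2 *v liftv q) = cinner p (bimat_apply P1 P2 q) + cnj (cinner p (bimat_apply P1 P2 q))"
  unfolding cinner_def bimat_apply_def bimat_lift_def liftv_def
    matrix_vector_mult_def cmat_conj_def cvec_conj_def
  apply (simp add: sum_plus_UNIV sum_distrib_left sum.distrib[symmetric] distrib_left)
  apply (rule sum.cong, simp)
  apply (rule sum.cong, simp)
  apply (simp add: algebra_simps)
  done
  then show ?thesis by (simp add: complex_add_cnj)
qed

lemma cinner_herm:
  assumes "M = cmat_adj M"
  shows "cinner t (M *v s) = cnj (cinner s (M *v t))"
proof -
  have M: "M $ i $ j = cnj (M $ j $ i)" for i j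
  proof -
    have "M $ i $ j = cmat_adj M $ i $ j" using arg_cong[OF assms, of "\<lambda>N. N $ i $ j"] .
    also have "\<dots> = cnj (M $ j $ i)" by (simp add: cmat_adj_def cmat_conj_def transpose_def)
    finally show ?thesis .
  qed
  show ?thesis
    unfolding cinner_def matrix_vector_mult_def
    apply (simp add: sum_distrib_left)
    apply (subst sum.swap)
    apply (rule sum.cong, simp)
    apply (rule sum.cong, simp)
    apply (subst M, simp)
    done
qed

lemma cinner_expand:
  "cinner (\<chi> i. s$i + \<i> * t$i) (M *v (\<chi> i. s$i + \<i> * t$i)) =
   cinner s (M *v s) + \<i> * cinner s (M *v t) - \<i> * cinner t (M *v s) + cinner t (M *v t)"
  unfolding cinner_def matrix_vector_mult_def
  apply (simp add: sum_distrib_left sum.distrib[symmetric] sum_subtractf[symmetric])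
  apply (rule sum.cong, simp)
  apply (rule sum.cong, simp)
  apply (simp add: algebra_simps)
  done

lemma quad_split:
  assumes "M = cmat_adj M"
  shows "Re (cinner (\<chi> i. s$i + \<i> * t$i) (M *v (\<chi> i. s$i + \<i> * t$i))) =
     Re (cinner s (M *v s)) + Re (cinner t (M *v t)) - 2 * Im (cinner s (M *v t))"
  unfolding cinner_expand cinner_herm[OF assms, of t s] by simp

lemma decomp:
  fixes z :: "complex^('n::finite+'n)"
  defines "p \<equiv> (\<chi> a. (z$Inl a + cnj (z$Inr a)) / 2)"
    and "q \<equiv> (\<chi> a. - \<i> * (z$Inl a - cnj (z$Inr a)) / 2)"
  shows "z = (\<chi> i. liftv p $ i + \<i> * liftv q $ i)"
    and "z \<noteq> 0 \<Longrightarrow> p \<noteq> 0 \<or> q \<noteq> 0"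
proof -
  have c: "z $ i = liftv p $ i + \<i> * liftv q $ i" for i
    unfolding liftv_def p_def q_def
    by (cases i) (simp_all add: complex_eq_iff field_simps)
  show 1: "z = (\<chi> i. liftv p $ i + \<i> * liftv q $ i)"
    using c by (simp add: vec_eq_iff)
  show "z \<noteq> 0 \<Longrightarrow> p \<noteq> 0 \<or> q \<noteq> 0"
  proof (rule ccontr)
    assume "z \<noteq> 0" "\<not> (p \<noteq> 0 \<or> q \<noteq> 0)"
    then have "liftv p = 0" "liftv q = 0" by (simp_all add: liftv_eq0)
    then have "z = 0" using c by (simp add: vec_eq_iff)
    then show False using \<open>z \<noteq> 0\<close> by simp
  qed
qed

lemma lift_form_real:
  "Im (cinner (liftv p) (bimat_lift P1 P2 *v liftv q)) = 0"
  unfolding form_lift by simp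

lemma herm_real:
  "bimat_hermite P1 P2 \<longleftrightarrow> bimat_real P1 P2 = transpose (bimat_real P1 P2)"
proof
  assume "bimat_hermite P1 P2"
  then have h1: "P1 = cmat_adj P1" and h2: "P2 = transpose P2" by (simp_all add: bimat_hermite_def)
  have A: "P1 $ a $ b = cnj (P1 $ b $ a)" for a b
  proof -
    have "P1 $ a $ b = cmat_adj P1 $ a $ b" using arg_cong[OF h1, of "\<lambda>N. N $ a $ b"] .
    also have "\<dots> = cnj (P1 $ b $ a)" by (simp add: cmat_adj_def cmat_conj_def transpose_def)
    finally show ?thesis .
  qed
  have B: "P2 $ a $ b = P2 $ b $ a" for a b
  proof -
    have "P2 $ a $ b = transpose P2 $ a $ b" using arg_cong[OF h2, of "\<lambda>N. N $ a $ b"] .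
    also have "\<dots> = P2 $ b $ a" by (simp add: transpose_def)
    finally show ?thesis .
  qed
  have r: "Re (P1$a$b) = Re (P1$b$a)" "Im (P1$a$b) = - Im (P1$b$a)"
     "Re (P2$a$b) = Re (P2$b$a)" "Im (P2$a$b) = Im (P2$b$a)" for a b
    using arg_cong[OF A[of a b], of Re] arg_cong[OF A[of a b], of Im]
      arg_cong[OF B[of a b], of Re] arg_cong[OF B[of a b], of Im] by simp_all
  have "bimat_real P1 P2 $ i $ j = bimat_real P1 P2 $ j $ i" for i j
  proof (cases i; cases j)
    fix a b assume "i = Inl a" "j = Inl b" then show ?thesis using r[of a b] by (simp add: bimat_real_def)
  next
    fix a b assume "i = Inl a" "j = Inr b" then show ?thesis using r[of a b] by (simp add: bimat_real_def)
  next
    fix a b assume "i = Inr a" "j = Inl b" then show ?thesis using r[of a b] by (simp add: bimat_real_def)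
  next
    fix a b assume "i = Inr a" "j = Inr b" then show ?thesis using r[of a b] by (simp add: bimat_real_def)
  qed
  then show "bimat_real P1 P2 = transpose (bimat_real P1 P2)"
    by (simp add: vec_eq_iff transpose_def)
next
  assume h: "bimat_real P1 P2 = transpose (bimat_real P1 P2)"
  have e: "bimat_real P1 P2 $ i $ j = bimat_real P1 P2 $ j $ i" for i j
    by (subst h, simp add: transpose_def)
  have f: "P1 $ a $ b = cnj (P1 $ b $ a) \<and> P2 $ a $ b = P2 $ b $ a" for a b
  proof -
    have e1: "Re (P1$a$b) + Re (P2$a$b) = Re (P1$b$a) + Re (P2$b$a)"
      using e[of "Inl a" "Inl b"] by (simp add: bimat_real_def)
    have e2: "Re (P1$a$b) - Re (P2$a$b) = Re (P1$b$a) - Re (P2$b$a)"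
      using e[of "Inr a" "Inr b"] by (simp add: bimat_real_def)
    have e3: "- Im (P1$a$b) - Im (P2$a$b) = Im (P1$b$a) - Im (P2$b$a)"
      using e[of "Inl a" "Inr b"] by (simp add: bimat_real_def)
    have e4: "Im (P1$a$b) - Im (P2$a$b) = - Im (P1$b$a) - Im (P2$b$a)"
      using e[of "Inr a" "Inl b"] by (simp add: bimat_real_def)
    have "Re (P1$a$b) = Re (P1$b$a)" "Im (P1$a$b) = - Im (P1$b$a)"
      "Re (P2$a$b) = Re (P2$b$a)" "Im (P2$a$b) = Im (P2$b$a)"
      using e1 e2 e3 e4 by linarith+
    then show ?thesis by (simp add: complex_eq_iff)
  qed
  have g1: "P1 $ a $ b = cmat_adj P1 $ a $ b" for a b
    using conjunct1[OF f[of a b]] by (simp add: cmat_adj_def cmat_conj_def transpose_def)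
  have g2: "P2 $ a $ b = transpose P2 $ a $ b" for a b
    using conjunct2[OF f[of a b]] by (simp add: transpose_def)
  show "bimat_hermite P1 P2"
    unfolding bimat_hermite_def vec_eq_iff using g1 g2 by blast
qed

lemma herm_lift:
  "bimat_hermite P1 P2 \<longleftrightarrow> bimat_lift P1 P2 = cmat_adj (bimat_lift P1 P2)"
proof
  assume "bimat_hermite P1 P2"
  then have h1: "P1 = cmat_adj P1" and h2: "P2 = transpose P2" by (simp_all add: bimat_hermite_def)
  have A: "P1 $ a $ b = cnj (P1 $ b $ a)" for a b
  proof -
    have "P1 $ a $ b = cmat_adj P1 $ a $ b" using arg_cong[OF h1, of "\<lambda>N. N $ a $ b"] .
    also have "\<dots> = cnj (P1 $ b $ a)" by (simp add: cmat_adj_def cmat_conj_def transpose_def)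
    finally show ?thesis .
  qed
  have B: "P2 $ a $ b = P2 $ b $ a" for a b
  proof -
    have "P2 $ a $ b = transpose P2 $ a $ b" using arg_cong[OF h2, of "\<lambda>N. N $ a $ b"] .
    also have "\<dots> = P2 $ b $ a" by (simp add: transpose_def)
    finally show ?thesis .
  qed
  have "bimat_lift P1 P2 $ i $ j = cnj (bimat_lift P1 P2 $ j $ i)" for i j
  proof (cases i; cases j)
    fix a b assume "i = Inl a" "j = Inl b" then show ?thesis using A[of a b] by (simp add: bimat_lift_def)
  next
    fix a b assume "i = Inl a" "j = Inr b" then show ?thesis using B[of a b] by (simp add: bimat_lift_def)
  next
    fix a b assume "i = Inr a" "j = Inl b" then show ?thesis using B[of a b] by (simp add: bimat_lift_def)
  next
    fix a b assume "i = Inr a" "j = Inr b" then show ?thesis using A[of a b] by (simp add: bimat_lift_def)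
  qed
  note ee = this
  have "bimat_lift P1 P2 $ i $ j = cmat_adj (bimat_lift P1 P2) $ i $ j" for i j
  proof -
    have "cmat_adj (bimat_lift P1 P2) $ i $ j = cnj (bimat_lift P1 P2 $ j $ i)"
      by (simp add: transpose_def cmat_adj_def cmat_conj_def)
    then show ?thesis using ee[of i j] by (rule ssubst)
  qed
  then show "bimat_lift P1 P2 = cmat_adj (bimat_lift P1 P2)"
    unfolding vec_eq_iff by blast
next
  assume h: "bimat_lift P1 P2 = cmat_adj (bimat_lift P1 P2)"
  have e: "bimat_lift P1 P2 $ i $ j = cnj (bimat_lift P1 P2 $ j $ i)" for i j
    by (subst h, simp add: transpose_def cmat_adj_def cmat_conj_def)
  have f: "P1 $ a $ b = cnj (P1 $ b $ a) \<and> P2 $ a $ b = P2 $ b $ a" for a b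
  proof
    show "P1 $ a $ b = cnj (P1 $ b $ a)" using e[of "Inl a" "Inl b"] by (simp add: bimat_lift_def)
    show "P2 $ a $ b = P2 $ b $ a" using e[of "Inr a" "Inl b"] by (simp add: bimat_lift_def)
  qed
  have g1: "P1 $ a $ b = cmat_adj P1 $ a $ b" for a b
    using conjunct1[OF f[of a b]] by (simp add: cmat_adj_def cmat_conj_def transpose_def)
  have g2: "P2 $ a $ b = transpose P2 $ a $ b" for a b
    using conjunct2[OF f[of a b]] by (simp add: transpose_def)
  show "bimat_hermite P1 P2"
    unfolding bimat_hermite_def vec_eq_iff using g1 g2 by blast
qed


lemma cinner_zero: "cinner 0 y = 0"
  unfolding cinner_def by simp

lemma form_zero: "Re (cinner 0 (bimat_apply P1 P2 0)) = 0"
  by (simp add: cinner_zero)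

lemma lift_split:
  assumes herm: "bimat_hermite P1 P2" and nz: "z \<noteq> 0"
  obtains p q where "p \<noteq> 0 \<or> q \<noteq> 0"
    "Re (cinner z (bimat_lift P1 P2 *v z)) =
       2 * Re (cinner p (bimat_apply P1 P2 p)) + 2 * Re (cinner q (bimat_apply P1 P2 q))"
proof -
  define p where "p = (\<chi> a. (z$Inl a + cnj (z$Inr a)) / 2)"
  define q where "q = (\<chi> a. - \<i> * (z$Inl a - cnj (z$Inr a)) / 2)"
  have z: "z = (\<chi> i. liftv p $ i + \<i> * liftv q $ i)"
    unfolding p_def q_def by (rule decomp(1))
  have M: "bimat_lift P1 P2 = cmat_adj (bimat_lift P1 P2)" using herm herm_lift by blast
  have "Re (cinner z (bimat_lift P1 P2 *v z)) =
       2 * Re (cinner p (bimat_apply P1 P2 p)) + 2 * Re (cinner q (bimat_apply P1 P2 q))"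
    apply (subst z, subst z)
    apply (subst quad_split[OF M])
    apply (simp add: form_lift lift_form_real)
    done
  moreover have "z \<noteq> 0 \<Longrightarrow> p \<noteq> 0 \<or> q \<noteq> 0"
    unfolding p_def q_def by (rule decomp(2))
  ultimately show ?thesis using that nz by blast
qed

lemma lift_pd:
  assumes herm: "bimat_hermite P1 P2"
  shows "(\<forall>z. z \<noteq> 0 \<longrightarrow> Re (cinner z (bimat_lift P1 P2 *v z)) > 0) \<longleftrightarrow>
         (\<forall>x. x \<noteq> 0 \<longrightarrow> Re (cinner x (bimat_apply P1 P2 x)) > 0)"
proof
  assume h: "\<forall>z. z \<noteq> 0 \<longrightarrow> Re (cinner z (bimat_lift P1 P2 *v z)) > 0"
  show "\<forall>x. x \<noteq> 0 \<longrightarrow> Re (cinner x (bimat_apply P1 P2 x)) > 0"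
  proof (intro allI impI)
    fix x :: "complex^'a" assume "x \<noteq> 0"
    then have "liftv x \<noteq> 0" by (simp add: liftv_eq0)
    with h have "Re (cinner (liftv x) (bimat_lift P1 P2 *v liftv x)) > 0" by blast
    then show "Re (cinner x (bimat_apply P1 P2 x)) > 0" by (simp add: form_lift)
  qed
next
  assume h: "\<forall>x. x \<noteq> 0 \<longrightarrow> Re (cinner x (bimat_apply P1 P2 x)) > 0"
  then have h0: "Re (cinner x (bimat_apply P1 P2 x)) \<ge> 0" for x
    by (cases "x = 0") (auto simp: form_zero intro: less_imp_le)
  show "\<forall>z. z \<noteq> 0 \<longrightarrow> Re (cinner z (bimat_lift P1 P2 *v z)) > 0"
  proof (intro allI impI)
    fix z :: "complex^('a+'a)" assume "z \<noteq> 0"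
    then obtain p q where pq: "p \<noteq> 0 \<or> q \<noteq> 0"
    "Re (cinner z (bimat_lift P1 P2 *v z)) =
       2 * Re (cinner p (bimat_apply P1 P2 p)) + 2 * Re (cinner q (bimat_apply P1 P2 q))"
      using lift_split[OF herm \<open>z \<noteq> 0\<close>] by metis
    show "Re (cinner z (bimat_lift P1 P2 *v z)) > 0"
      unfolding pq(2) using pq(1) h h0[of p] h0[of q] by fastforce
  qed
qed

lemma lift_psd:
  assumes herm: "bimat_hermite P1 P2"
  shows "(\<forall>z. z \<noteq> 0 \<longrightarrow> Re (cinner z (bimat_lift P1 P2 *v z)) \<ge> 0) \<longleftrightarrow>
         (\<forall>x. x \<noteq> 0 \<longrightarrow> Re (cinner x (bimat_apply P1 P2 x)) \<ge> 0)"
proof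
  assume h: "\<forall>z. z \<noteq> 0 \<longrightarrow> Re (cinner z (bimat_lift P1 P2 *v z)) \<ge> 0"
  show "\<forall>x. x \<noteq> 0 \<longrightarrow> Re (cinner x (bimat_apply P1 P2 x)) \<ge> 0"
  proof (intro allI impI)
    fix x :: "complex^'a" assume "x \<noteq> 0"
    then have "liftv x \<noteq> 0" by (simp add: liftv_eq0)
    with h have "Re (cinner (liftv x) (bimat_lift P1 P2 *v liftv x)) \<ge> 0" by blast
    then show "Re (cinner x (bimat_apply P1 P2 x)) \<ge> 0" by (simp add: form_lift)
  qed
next
  assume h: "\<forall>x. x \<noteq> 0 \<longrightarrow> Re (cinner x (bimat_apply P1 P2 x)) \<ge> 0"
  then have h0: "Re (cinner x (bimat_apply P1 P2 x)) \<ge> 0" for x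
    by (cases "x = 0") (auto simp: form_zero)
  show "\<forall>z. z \<noteq> 0 \<longrightarrow> Re (cinner z (bimat_lift P1 P2 *v z)) \<ge> 0"
  proof (intro allI impI)
    fix z :: "complex^('a+'a)" assume "z \<noteq> 0"
    then obtain p q where pq: "p \<noteq> 0 \<or> q \<noteq> 0"
    "Re (cinner z (bimat_lift P1 P2 *v z)) =
       2 * Re (cinner p (bimat_apply P1 P2 p)) + 2 * Re (cinner q (bimat_apply P1 P2 q))"
      using lift_split[OF herm \<open>z \<noteq> 0\<close>] by metis
    show "Re (cinner z (bimat_lift P1 P2 *v z)) \<ge> 0"
      unfolding pq(2) using h0[of p] h0[of q] by simp
  qed
qed

lemma real_pd:
  "(\<forall>x. x \<noteq> 0 \<longrightarrow> Re (cinner x (bimat_apply P1 P2 x)) > 0) \<longleftrightarrow>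
   (\<forall>w. w \<noteq> 0 \<longrightarrow> w \<bullet> (bimat_real P1 P2 *v w) > 0)"
  apply (simp add: form_real)
  apply (metis realvec_cvec realvec_eq0)
  done

lemma real_psd:
  "(\<forall>x. x \<noteq> 0 \<longrightarrow> Re (cinner x (bimat_apply P1 P2 x)) \<ge> 0) \<longleftrightarrow>
   (\<forall>w. w \<noteq> 0 \<longrightarrow> w \<bullet> (bimat_real P1 P2 *v w) \<ge> 0)"
  apply (simp add: form_real)
  apply (metis realvec_cvec realvec_eq0)
  done

definition binv :: "real^('n+'n)^('n+'n) \<Rightarrow> (complex^'n^'n) \<times> (complex^'n^'n)" where
  "binv P = ((\<chi> a b. Complex ((P$Inl a$Inl b + P$Inr a$Inr b)/2) ((P$Inr a$Inl b - P$Inl a$Inr b)/2)),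
             (\<chi> a b. Complex ((P$Inl a$Inl b - P$Inr a$Inr b)/2) ((- P$Inl a$Inr b - P$Inr a$Inl b)/2)))"

lemma binv_real: "bimat_real (fst (binv P)) (snd (binv P)) = P"
proof -
  have "bimat_real (fst (binv P)) (snd (binv P)) $ i $ j = P $ i $ j" for i j
    unfolding bimat_real_def binv_def
    by (cases i; cases j) (simp_all add: field_simps)
  then show ?thesis by (simp add: vec_eq_iff)
qed

lemma real_inj:
  assumes "bimat_real P1 P2 = bimat_real Q1 Q2"
  shows "P1 = Q1 \<and> P2 = Q2"
proof -
  have e: "bimat_real P1 P2 $ i $ j = bimat_real Q1 Q2 $ i $ j" for i j using assms by simp
  have "P1 $ a $ b = Q1 $ a $ b \<and> P2 $ a $ b = Q2 $ a $ b" for a b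
    using e[of "Inl a" "Inl b"] e[of "Inr a" "Inr b"] e[of "Inl a" "Inr b"] e[of "Inr a" "Inl b"]
    by (simp add: bimat_real_def complex_eq_iff)
  then show ?thesis by (simp add: vec_eq_iff)
qed

theorem lemma7:
  shows "(\<forall>P1 P2 :: complex^'n^'n.
            (bimat_pd P1 P2 \<longleftrightarrow> rmat_pd (bimat_real P1 P2)) \<and>
            (bimat_pd P1 P2 \<longleftrightarrow> cmat_pd (bimat_lift P1 P2)) \<and>
            (bimat_psd P1 P2 \<longleftrightarrow> rmat_psd (bimat_real P1 P2)) \<and>
            (bimat_psd P1 P2 \<longleftrightarrow> cmat_psd (bimat_lift P1 P2))) \<and>
         (\<forall>P :: real^('n+'n)^('n+'n).
            (rmat_pd P \<longleftrightarrow>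
               (\<exists>!Q :: (complex^'n^'n) \<times> (complex^'n^'n).
                  bimat_pd (fst Q) (snd Q) \<and> bimat_real (fst Q) (snd Q) = P)) \<and>
            (rmat_psd P \<longleftrightarrow>
               (\<exists>!Q :: (complex^'n^'n) \<times> (complex^'n^'n).
                  bimat_psd (fst Q) (snd Q) \<and> bimat_real (fst Q) (snd Q) = P)))"
proof -
  have A: "(bimat_pd P1 P2 \<longleftrightarrow> rmat_pd (bimat_real P1 P2)) \<and>
            (bimat_pd P1 P2 \<longleftrightarrow> cmat_pd (bimat_lift P1 P2)) \<and>
            (bimat_psd P1 P2 \<longleftrightarrow> rmat_psd (bimat_real P1 P2)) \<and>
            (bimat_psd P1 P2 \<longleftrightarrow> cmat_psd (bimat_lift P1 P2))" for P1 P2 :: "complex^'n^'n"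
    unfolding bimat_pd_def bimat_psd_def rmat_pd_def rmat_psd_def cmat_pd_def cmat_psd_def
    using herm_real[of P1 P2] herm_lift[of P1 P2] lift_pd[of P1 P2] lift_psd[of P1 P2]
      real_pd[of P1 P2] real_psd[of P1 P2]
    by blast
  have B: "(rmat_pd P \<longleftrightarrow>
               (\<exists>!Q :: (complex^'n^'n) \<times> (complex^'n^'n).
                  bimat_pd (fst Q) (snd Q) \<and> bimat_real (fst Q) (snd Q) = P)) \<and>
            (rmat_psd P \<longleftrightarrow>
               (\<exists>!Q :: (complex^'n^'n) \<times> (complex^'n^'n).
                  bimat_psd (fst Q) (snd Q) \<and> bimat_real (fst Q) (snd Q) = P))"
    for P :: "real^('n+'n)^('n+'n)"
  proof -
    have uq: "Q = binv P" if "bimat_real (fst Q) (snd Q) = P" for Q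
      using real_inj[of "fst Q" "snd Q" "fst (binv P)" "snd (binv P)"] that binv_real[of P]
      by (simp add: prod_eq_iff)
    show ?thesis
    proof (intro conjI iffI)
      assume "rmat_pd P"
      then have "bimat_pd (fst (binv P)) (snd (binv P))" using A binv_real by metis
      then show "\<exists>!Q. bimat_pd (fst Q) (snd Q) \<and> bimat_real (fst Q) (snd Q) = P"
        using binv_real uq by blast
    next
      assume "\<exists>!Q. bimat_pd (fst Q) (snd Q) \<and> bimat_real (fst Q) (snd Q) = P"
      then show "rmat_pd P" using A by blast
    next
      assume "rmat_psd P"
      then have "bimat_psd (fst (binv P)) (snd (binv P))" using A binv_real by metis
      then show "\<exists>!Q. bimat_psd (fst Q) (snd Q) \<and> bimat_real (fst Q) (snd Q) = P"
        using binv_real uq by blast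
    next
      assume "\<exists>!Q. bimat_psd (fst Q) (snd Q) \<and> bimat_real (fst Q) (snd Q) = P"
      then show "rmat_psd P" using A by blast
    qed
  qed
  show ?thesis using A B by blast
qed

end
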